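(* For an Aronszajn tree $T$ the following are equivalent: (1) $T$ is SS; (2) $a(T)$ is $\mathsf{stat}$-pc; (3) $\mathbb{S}(T)$ is $\mathsf{stat}$-pc.
   Context: An Aronszajn tree is a tree of height $\omega_1$ with all levels and chains countable. A subset $X\subseteq T$ is stationary if $\{\mathrm{ht}(t):t\in X\}$ is stationary in $\omega_1$; $T$ is SS if every stationary subset of $T$ contains a stationary antichain. $a(T)$ is the poset of finite antichains of $T$ ordered by reverse inclusion. $\mathbb{S}(T)$ is the poset of finite partial functions $p:T\to\omega$ such that $p^{-1}(\{n\})$ is an antichain for every $n$, ordered by reverse inclusion. A poset is $\mathsf{stat}$-pc if for every stationary $S\subseteq\omega_1$ and every $\langle p_\alpha:\alpha\in S\rangle$ there is a stationary $S'\subseteq S$ with $\{p_\alpha:\alpha\in S'\}$ centered (every finite subset has a common lower bound). *)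

theory Defs
  imports "HOL-Library.Countable_Set"
begin

text \<open>omega_1 is represented by an abstract well-ordered type 'i that is uncountable
  and all of whose proper initial segments are countable (unique up to isomorphism).\<close>
definition omega1_like :: "'i::wellorder itself \<Rightarrow> bool" where
  "omega1_like _ \<longleftrightarrow> \<not> countable (UNIV :: 'i set) \<and> (\<forall>i::'i. countable {j. j < i})"

definition unbounded :: "'i::wellorder set \<Rightarrow> bool" where
  "unbounded C \<longleftrightarrow> (\<forall>i. \<exists>j\<in>C. i \<le> j)"

definition closed_set :: "'i::wellorder set \<Rightarrow> bool" where
  "closed_set C \<longleftrightarrow> (\<forall>i. (\<exists>j. j < i) \<and> (\<forall>j<i. \<exists>k\<in>C. j < k \<and> k < i) \<longrightarrow> i \<in> C)"

definition club :: "'i::wellorder set \<Rightarrow> bool" where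
  "club C \<longleftrightarrow> closed_set C \<and> unbounded C"

definition stationary :: "'i::wellorder set \<Rightarrow> bool" where
  "stationary S \<longleftrightarrow> (\<forall>C. club C \<longrightarrow> S \<inter> C \<noteq> {})"

definition is_tree :: "'a set \<Rightarrow> ('a \<Rightarrow> 'a \<Rightarrow> bool) \<Rightarrow> bool" where
  "is_tree T lt \<longleftrightarrow>
     (\<forall>t\<in>T. \<not> lt t t) \<and>
     (\<forall>s\<in>T. \<forall>t\<in>T. \<forall>u\<in>T. lt s t \<longrightarrow> lt t u \<longrightarrow> lt s u) \<and>
     (\<forall>t\<in>T. \<forall>s\<in>T. \<forall>u\<in>T. lt s t \<longrightarrow> lt u t \<longrightarrow> s = u \<or> lt s u \<or> lt u s) \<and>
     (\<forall>t\<in>T. \<forall>A. A \<subseteq> {s\<in>T. lt s t} \<longrightarrow> A \<noteq> {} \<longrightarrow> (\<exists>m\<in>A. \<forall>a\<in>A. \<not> lt a m))"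

definition has_height :: "'a set \<Rightarrow> ('a \<Rightarrow> 'a \<Rightarrow> bool) \<Rightarrow> 'a \<Rightarrow> 'i::wellorder \<Rightarrow> bool" where
  "has_height T lt t i \<longleftrightarrow>
     (\<exists>f. bij_betw f {j. j < i} {s\<in>T. lt s t} \<and>
          (\<forall>j k. j < i \<longrightarrow> k < i \<longrightarrow> (j < k \<longleftrightarrow> lt (f j) (f k))))"

definition ht :: "'a set \<Rightarrow> ('a \<Rightarrow> 'a \<Rightarrow> bool) \<Rightarrow> 'a \<Rightarrow> 'i::wellorder" where
  "ht T lt t = (THE i. has_height T lt t i)"

definition chain :: "'a set \<Rightarrow> ('a \<Rightarrow> 'a \<Rightarrow> bool) \<Rightarrow> 'a set \<Rightarrow> bool" where
  "chain T lt C \<longleftrightarrow> C \<subseteq> T \<and> (\<forall>s\<in>C. \<forall>t\<in>C. s = t \<or> lt s t \<or> lt t s)"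

definition antichain :: "'a set \<Rightarrow> ('a \<Rightarrow> 'a \<Rightarrow> bool) \<Rightarrow> 'a set \<Rightarrow> bool" where
  "antichain T lt A \<longleftrightarrow> A \<subseteq> T \<and> (\<forall>s\<in>A. \<forall>t\<in>A. s \<noteq> t \<longrightarrow> \<not> lt s t \<and> \<not> lt t s)"

definition aronszajn :: "'i::wellorder itself \<Rightarrow> 'a set \<Rightarrow> ('a \<Rightarrow> 'a \<Rightarrow> bool) \<Rightarrow> bool" where
  "aronszajn _ T lt \<longleftrightarrow> is_tree T lt \<and>
     (\<forall>t\<in>T. \<exists>i::'i. has_height T lt t i) \<and>
     (\<forall>i::'i. \<exists>t\<in>T. ht T lt t = i) \<and>
     (\<forall>i::'i. countable {t\<in>T. ht T lt t = i}) \<and>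
     (\<forall>C. chain T lt C \<longrightarrow> countable C)"

definition stationary_subset :: "'i::wellorder itself \<Rightarrow> 'a set \<Rightarrow> ('a \<Rightarrow> 'a \<Rightarrow> bool) \<Rightarrow> 'a set \<Rightarrow> bool" where
  "stationary_subset _ T lt X \<longleftrightarrow> X \<subseteq> T \<and> stationary ((ht T lt :: 'a \<Rightarrow> 'i) ` X)"

definition SS :: "'i::wellorder itself \<Rightarrow> 'a set \<Rightarrow> ('a \<Rightarrow> 'a \<Rightarrow> bool) \<Rightarrow> bool" where
  "SS I T lt \<longleftrightarrow> (\<forall>X. stationary_subset I T lt X \<longrightarrow>
      (\<exists>A\<subseteq>X. antichain T lt A \<and> stationary_subset I T lt A))"

definition centered :: "'p set \<Rightarrow> ('p \<Rightarrow> 'p \<Rightarrow> bool) \<Rightarrow> 'p set \<Rightarrow> bool" where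
  "centered P le Q \<longleftrightarrow> (\<forall>F. finite F \<longrightarrow> F \<subseteq> Q \<longrightarrow> (\<exists>r\<in>P. \<forall>q\<in>F. le r q))"

definition stat_pc :: "'i::wellorder itself \<Rightarrow> 'p set \<Rightarrow> ('p \<Rightarrow> 'p \<Rightarrow> bool) \<Rightarrow> bool" where
  "stat_pc _ P le \<longleftrightarrow> (\<forall>(S::'i set) (p::'i \<Rightarrow> 'p). stationary S \<longrightarrow> (\<forall>\<alpha>\<in>S. p \<alpha> \<in> P) \<longrightarrow>
      (\<exists>S'\<subseteq>S. stationary S' \<and> centered P le (p ` S')))"

definition aT :: "'a set \<Rightarrow> ('a \<Rightarrow> 'a \<Rightarrow> bool) \<Rightarrow> 'a set set" where
  "aT T lt = {A. finite A \<and> antichain T lt A}"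

definition aT_le :: "'a set \<Rightarrow> 'a set \<Rightarrow> bool" where
  "aT_le p q \<longleftrightarrow> q \<subseteq> p"

definition ST :: "'a set \<Rightarrow> ('a \<Rightarrow> 'a \<Rightarrow> bool) \<Rightarrow> ('a \<rightharpoonup> nat) set" where
  "ST T lt = {p. finite (dom p) \<and> dom p \<subseteq> T \<and> (\<forall>n. antichain T lt {t. p t = Some n})}"

definition ST_le :: "('a \<rightharpoonup> nat) \<Rightarrow> ('a \<rightharpoonup> nat) \<Rightarrow> bool" where
  "ST_le p q \<longleftrightarrow> q \<subseteq>\<^sub>m p"

end

theory Submission
  imports Defs
begin


lemma o1_countable_bounded:
  assumes o: "omega1_like TYPE('i::wellorder)" and c: "countable (A::'i set)"
  shows "\<exists>b. \<forall>a\<in>A. a < b"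
proof (rule ccontr)
  assume "\<not> ?thesis"
  hence "UNIV = (\<Union>a\<in>A. insert a {j. j < a})"
    by (auto simp: not_less) (metis le_less)
  moreover have "countable (\<Union>a\<in>A. insert a {j. j < a})"
    using o c unfolding omega1_like_def by auto
  ultimately show False using o unfolding omega1_like_def by simp
qed

lemma o1_no_max:
  assumes o: "omega1_like TYPE('i::wellorder)"
  shows "\<exists>y. (x::'i) < y"
  using o1_countable_bounded[OF o, of "{x}"] by auto

lemma build_seq:
  assumes "\<And>k (x::'a). \<exists>y. Q k x y"
  obtains s where "s 0 = i" "\<And>k. Q k (s k) (s (Suc k))"
proof -
  define s where "s = rec_nat i (\<lambda>k x. SOME y. Q k x y)"
  have "s 0 = i" by (simp add: s_def)
  moreover have "Q k (s k) (s (Suc k))" for k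
    unfolding s_def using someI_ex[OF assms] by simp
  ultimately show ?thesis using that by blast
qed

lemma seq_sup:
  assumes o: "omega1_like TYPE('i::wellorder)" and inc: "\<And>n. (s::nat \<Rightarrow> 'i) n < s (Suc n)"
  obtains d where "\<And>n. s n < d" "\<And>j. j < d \<Longrightarrow> \<exists>n. j < s n"
proof -
  have ex: "\<exists>b. \<forall>n. s n < b" using o1_countable_bounded[OF o, of "range s"] by auto
  define d where "d = (LEAST b. \<forall>n. s n < b)"
  have 1: "\<forall>n. s n < d" using LeastI_ex[OF ex] by (simp add: d_def)
  have 2: "\<exists>n. j < s n" if "j < d" for j
  proof (rule ccontr)
    assume "\<not> (\<exists>n. j < s n)"
    then have "\<forall>n. s n \<le> j" by (auto simp: not_less)
    then have "\<forall>n. s n < j" using inc less_le_trans by blast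
    then have "d \<le> j" unfolding d_def by (rule Least_le)
    with that show False by simp
  qed
  show ?thesis using that 1 2 by blast
qed

lemma mono_seq:
  assumes inc: "\<And>n. (s::nat \<Rightarrow> 'i::wellorder) n < s (Suc n)" and "n \<le> m"
  shows "s n \<le> s m"
  using lift_Suc_mono_le[of s, OF less_imp_le[OF inc]] assms(2) by blast

lemma closed_seq:
  assumes "closed_set C" "\<And>n. (s::nat \<Rightarrow> 'i::wellorder) n < s (Suc n)" "\<And>n. s n < d"
    "\<And>j. j<d \<Longrightarrow> \<exists>n. j < s n" "\<And>n. \<exists>m\<ge>n. s m \<in> C"
  shows "d \<in> C"
proof -
  have "\<exists>k\<in>C. j < k \<and> k < d" if "j < d" for j
  proof -
    obtain n where n: "j < s n" using assms(4)[OF \<open>j < d\<close>] by blast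
    obtain m where m: "m \<ge> n" "s m \<in> C" using assms(5) by blast
    have "s n \<le> s m" using mono_seq[where s=s, OF assms(2) m(1)] .
    thus ?thesis using n m assms(3)[of m] by (meson less_le_trans)
  qed
  moreover have "\<exists>j. j < d" using assms(3) by blast
  ultimately show ?thesis using assms(1) unfolding closed_set_def by blast
qed

lemma club_UNIV: "club (UNIV::'i::wellorder set)"
  unfolding club_def closed_set_def unbounded_def by auto

lemma club_Inter:
  assumes o: "omega1_like TYPE('i::wellorder)" and c: "countable I"
    and cl: "\<And>x. x\<in>I \<Longrightarrow> club (C x :: 'i set)"
  shows "club (\<Inter>x\<in>I. C x)"
proof (cases "I = {}")
  case True thus ?thesis using club_UNIV by simp
next
  case False
  define e where "e = from_nat_into I"
  have eI: "e n \<in> I" for n unfolding e_def by (rule from_nat_into[OF False])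
  have re: "range e = I" unfolding e_def by (rule range_from_nat_into[OF False c])
  have closed: "closed_set (\<Inter>x\<in>I. C x)"
    unfolding closed_set_def
  proof (intro allI impI)
    fix i assume i: "(\<exists>j. j < i) \<and> (\<forall>j<i. \<exists>k\<in>(\<Inter>x\<in>I. C x). j < k \<and> k < i)"
    show "i \<in> (\<Inter>x\<in>I. C x)"
    proof
      fix x assume x: "x \<in> I"
      have "closed_set (C x)" using cl[OF x] unfolding club_def by simp
      moreover have "\<forall>j<i. \<exists>k\<in>C x. j < k \<and> k < i" using i x by blast
      ultimately show "i \<in> C x" using i unfolding closed_set_def by blast
    qed
  qed
  have unb: "\<exists>j\<in>(\<Inter>x\<in>I. C x). i \<le> j" for i
  proof -
    have step: "\<exists>y. x < y \<and> y \<in> C (e (fst (prod_decode k)))" for k x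
    proof -
      obtain x' where "x < x'" using o1_no_max[OF o] by blast
      moreover obtain y where "y \<in> C (e (fst (prod_decode k)))" "x' \<le> y"
        using cl[OF eI] unfolding club_def unbounded_def by blast
      ultimately show ?thesis using less_le_trans by blast
    qed
    obtain s where s0: "s 0 = i" and sS: "\<And>k. s k < s (Suc k) \<and> s (Suc k) \<in> C (e (fst (prod_decode k)))"
      using build_seq[of "\<lambda>k x y. x < y \<and> y \<in> C (e (fst (prod_decode k)))", OF step] by metis
    have inc: "s k < s (Suc k)" for k using sS by blast
    obtain d where d1: "\<And>n. s n < d" and d2: "\<And>j. j < d \<Longrightarrow> \<exists>n. j < s n"
      using seq_sup[where s=s, OF o inc] by blast
    have "d \<in> C x" if xI: "x \<in> I" for x
    proof -
      obtain n' where x: "x = e n'" using xI re by auto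
      have "\<exists>m\<ge>n. s m \<in> C x" for n
      proof -
        have "s (Suc (prod_encode (n', n))) \<in> C x" using sS[of "prod_encode (n', n)"] x by simp
        moreover have "n \<le> Suc (prod_encode (n', n))" using le_prod_encode_2[of n n'] by simp
        ultimately show ?thesis by blast
      qed
      thus ?thesis using closed_seq[OF _ inc d1 d2] cl[OF xI] unfolding club_def by blast
    qed
    moreover have "i \<le> d" using d1[of 0] s0 by simp
    ultimately show ?thesis by blast
  qed
  show ?thesis using closed unb unfolding club_def unbounded_def by blast
qed

lemma club_Int:
  assumes o: "omega1_like TYPE('i::wellorder)" and "club (C::'i set)" "club D"
  shows "club (C \<inter> D)"
proof -
  have "club (\<Inter>b\<in>{True,False}. if b then C else D)"
    by (rule club_Inter[OF o]) (use assms in auto)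
  thus ?thesis by (simp add: Int_commute)
qed

lemma stationary_Int_club:
  assumes o: "omega1_like TYPE('i::wellorder)" and "stationary (S::'i set)" "club C"
  shows "stationary (S \<inter> C)"
  using assms club_Int[OF o] unfolding stationary_def by (metis inf_assoc)

lemma stationary_mono: "stationary S \<Longrightarrow> S \<subseteq> S' \<Longrightarrow> stationary S'"
  unfolding stationary_def by blast

lemma stationary_ne: "stationary (S::'i::wellorder set) \<Longrightarrow> S \<noteq> {}"
  unfolding stationary_def using club_UNIV by blast

lemma stationary_pigeon:
  assumes o: "omega1_like TYPE('i::wellorder)" and st: "stationary (S::'i set)"
    and c: "countable (g ` S)"
  shows "\<exists>v. stationary {a\<in>S. g a = v}"
proof (rule ccontr)
  assume "\<not> ?thesis"
  hence "\<forall>v. \<exists>C. club C \<and> {a\<in>S. g a = v} \<inter> C = {}" unfolding stationary_def by blast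
  then obtain C where C: "\<And>v. club (C v) \<and> {a\<in>S. g a = v} \<inter> C v = {}" by metis
  have "club (\<Inter>v\<in>g`S. C v)" using club_Inter[OF o c] C by blast
  then obtain a where "a \<in> S" "a \<in> (\<Inter>v\<in>g`S. C v)" using st unfolding stationary_def by blast
  thus False using C[of "g a"] by blast
qed

lemma fodor:
  assumes o: "omega1_like TYPE('i::wellorder)" and st: "stationary (S::'i set)"
    and reg: "\<And>a. a \<in> S \<Longrightarrow> f a < a"
  shows "\<exists>g. stationary {a\<in>S. f a = g}"
proof (rule ccontr)
  assume "\<not> ?thesis"
  hence "\<forall>v. \<exists>C. club C \<and> {a\<in>S. f a = v} \<inter> C = {}" unfolding stationary_def by blast
  then obtain C where C: "\<And>v. club (C v)" "\<And>v. {a\<in>S. f a = v} \<inter> C v = {}" by metis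
  define D where "D = {a. \<forall>g<a. a \<in> C g}"
  have closed: "closed_set D" unfolding closed_set_def
  proof (intro allI impI)
    fix d assume d: "(\<exists>j. j < d) \<and> (\<forall>j<d. \<exists>k\<in>D. j < k \<and> k < d)"
    have "d \<in> C g" if "g < d" for g
    proof -
      have "\<exists>k\<in>C g. j < k \<and> k < d" if "j < d" for j
      proof -
        obtain k where "k \<in> D" "max j g < k" "k < d" using d \<open>j < d\<close> \<open>g < d\<close>
          by (metis max_less_iff_conj)
        thus ?thesis unfolding D_def by auto
      qed
      thus ?thesis using C(1)[of g] d unfolding club_def closed_set_def by blast
    qed
    thus "d \<in> D" unfolding D_def by blast
  qed
  have unb: "\<exists>j\<in>D. i \<le> j" for i
  proof -
    have step: "\<exists>y. x < y \<and> y \<in> (\<Inter>g\<in>{g. g < x}. C g)" for k::nat and x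
    proof -
      obtain x' where "x < x'" using o1_no_max[OF o] by blast
      moreover have "club (\<Inter>g\<in>{g. g < x}. C g)"
        using club_Inter[OF o] C(1) o unfolding omega1_like_def by blast
      then obtain y where "y \<in> (\<Inter>g\<in>{g. g < x}. C g)" "x' \<le> y"
        unfolding club_def unbounded_def by blast
      ultimately show ?thesis using less_le_trans by blast
    qed
    obtain s where s0: "s 0 = i" and sS: "\<And>k. s k < s (Suc k) \<and> s (Suc k) \<in> (\<Inter>g\<in>{g. g < s k}. C g)"
      using build_seq[of "\<lambda>k x y. x < y \<and> y \<in> (\<Inter>g\<in>{g. g < x}. C g)", OF step] by metis
    have inc: "s k < s (Suc k)" for k using sS by blast
    obtain d where d1: "\<And>n. s n < d" and d2: "\<And>j. j < d \<Longrightarrow> \<exists>n. j < s n"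
      using seq_sup[where s=s, OF o inc] by blast
    have "d \<in> C g" if "g < d" for g
    proof -
      obtain n where n: "g < s n" using d2[OF \<open>g < d\<close>] by blast
      have "\<exists>m\<ge>n'. s m \<in> C g" for n'
      proof -
        have "s n \<le> s (max n n')" by (rule mono_seq[where s=s, OF inc]) simp
        hence "s (Suc (max n n')) \<in> C g" using sS[of "max n n'"] n by auto
        thus ?thesis by (intro exI[of _ "Suc (max n n')"]) auto
      qed
      thus ?thesis using closed_seq[OF _ inc d1 d2] C(1)[of g] unfolding club_def by blast
    qed
    hence "d \<in> D" unfolding D_def by blast
    moreover have "i \<le> d" using d1[of 0] s0 by simp
    ultimately show ?thesis by blast
  qed
  have "club D" using closed unb unfolding club_def unbounded_def by blast
  then obtain a where a: "a \<in> S" "a \<in> D" using st unfolding stationary_def by blast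
  hence "a \<in> C (f a)" using reg[OF a(1)] unfolding D_def by blast
  thus False using C(2)[of "f a"] a by blast
qed

lemma club_closure_points:
  assumes o: "omega1_like TYPE('i::wellorder)"
  shows "club {d. \<forall>a<d. (g::'i \<Rightarrow> 'i) a < d}"
proof -
  have closed: "closed_set {d. \<forall>a<d. g a < d}" unfolding closed_set_def
    by (auto, meson less_trans)
  have unb: "\<exists>j\<in>{d. \<forall>a<d. g a < d}. i \<le> j" for i
  proof -
    have step: "\<exists>y. x < y \<and> (\<forall>a\<le>x. g a < y)" for k::nat and x
    proof -
      have "countable (insert x (g ` {a. a \<le> x}))"
      proof -
        have e: "{a. a \<le> x} = insert x {a. a < x}" by auto
        have "countable {a. a < x}" using o unfolding omega1_like_def by blast
        hence "countable {a. a \<le> x}" unfolding e by simp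
        thus ?thesis by simp
      qed
      then obtain b where b: "\<forall>a\<in>insert x (g ` {a. a \<le> x}). a < b"
        using o1_countable_bounded[OF o] by blast
      have "x < b" using b by simp
      moreover have "\<forall>a\<le>x. g a < b" using b by simp
      ultimately show ?thesis by blast
    qed
    obtain s where s0: "s 0 = i" and sS: "\<And>k. s k < s (Suc k) \<and> (\<forall>a\<le>s k. g a < s (Suc k))"
      using build_seq[of "\<lambda>k x y. x < y \<and> (\<forall>a\<le>x. g a < y)", OF step] by metis
    have inc: "s k < s (Suc k)" for k using sS by blast
    obtain d where d1: "\<And>n. s n < d" and d2: "\<And>j. j < d \<Longrightarrow> \<exists>n. j < s n"
      using seq_sup[where s=s, OF o inc] by blast
    have "g a < d" if "a < d" for a
    proof -
      obtain n where "a < s n" using d2[OF \<open>a < d\<close>] by blast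
      thus ?thesis using sS[of n] d1[of "Suc n"] by (meson less_imp_le less_trans)
    qed
    moreover have "i \<le> d" using d1[of 0] s0 by simp
    ultimately show ?thesis by blast
  qed
  show ?thesis using closed unb unfolding club_def unbounded_def by blast
qed

definition limitp :: "'i::wellorder \<Rightarrow> bool" where
  "limitp d \<longleftrightarrow> (\<exists>j. j < d) \<and> (\<forall>j<d. \<exists>k. j < k \<and> k < d)"

lemma club_limits:
  assumes o: "omega1_like TYPE('i::wellorder)"
  shows "club {d::'i. limitp d}"
proof -
  have closed: "closed_set {d::'i. limitp d}" unfolding closed_set_def limitp_def by blast
  have unb: "\<exists>j\<in>{d. limitp d}. i \<le> j" for i :: 'i
  proof -
    have step: "\<exists>y. x < y" for k::nat and x::'i using o1_no_max[OF o] by blast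
    obtain s where s0: "s 0 = i" and inc: "\<And>k. s k < s (Suc k)"
      using build_seq[of "\<lambda>k x y. x < y", OF step] by metis
    obtain d where d1: "\<And>n. s n < d" and d2: "\<And>j. j < d \<Longrightarrow> \<exists>n. j < s n"
      using seq_sup[where s=s, OF o inc] by blast
    have "limitp d" unfolding limitp_def using d1 d2 by blast
    moreover have "i \<le> d" using d1[of 0] s0 by simp
    ultimately show ?thesis by blast
  qed
  show ?thesis using closed unb unfolding club_def unbounded_def by blast
qed

lemma limit_finite_bound:
  assumes "limitp (d::'i::wellorder)" "finite H" "\<forall>x\<in>H. x < d"
  shows "\<exists>b<d. \<forall>x\<in>H. x < b"
  using assms(2,3)
proof (induction H rule: finite_induct)
  case empty thus ?case using assms(1) unfolding limitp_def by auto
next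
  case (insert x H)
  then obtain b where b: "b < d" "\<forall>y\<in>H. y < b" by auto
  obtain k where "max b x < k" "k < d" using assms(1) b insert.prems unfolding limitp_def
    by (metis insertCI max_less_iff_conj)
  hence "\<forall>y\<in>insert x H. y < k" using b by (auto intro: less_trans)
  thus ?case using \<open>k < d\<close> by blast
qed



lemma inflationary:
  fixes f :: "'i::wellorder \<Rightarrow> 'i"
  assumes mono: "\<And>a b. a < j \<Longrightarrow> b < j \<Longrightarrow> a < b \<Longrightarrow> f a < f b"
    and into: "\<And>a. a < j \<Longrightarrow> f a < j"
  shows "k < j \<Longrightarrow> k \<le> f k"
proof (induction k rule: less_induct)
  case (less k)
  show ?case
  proof (rule ccontr)
    assume "\<not> k \<le> f k"
    hence fk: "f k < k" by simp
    have "f k \<le> f (f k)" using less.IH[OF fk] fk less.prems by (meson less_trans)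
    moreover have "f (f k) < f k" using mono[OF _ less.prems fk] fk less.prems by (meson less_trans)
    ultimately show False by simp
  qed
qed

lemma iso_le:
  fixes f :: "'i::wellorder \<Rightarrow> 'i"
  assumes mono: "\<And>a b. a < j \<Longrightarrow> b < j \<Longrightarrow> a < b \<Longrightarrow> f a < f b"
    and into: "\<And>a. a < j \<Longrightarrow> f a < i"
  shows "j \<le> i"
proof (rule ccontr)
  assume "\<not> j \<le> i" hence ij: "i < j" by simp
  have "i \<le> f i" using inflationary[of j f i] mono into ij by (meson less_trans)
  moreover have "f i < i" using into ij by blast
  ultimately show False by simp
qed

lemma has_height_unique:
  assumes "has_height T lt t (i::'i::wellorder)" "has_height T lt t j"
  shows "i = j"
proof -
  have le: "j \<le> i" if H1: "has_height T lt t (i::'i)" and H2: "has_height T lt t j" for i j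
  proof -
    obtain f where f: "bij_betw f {k. k < i} {s\<in>T. lt s t}"
      "\<And>a b. a < i \<Longrightarrow> b < i \<Longrightarrow> (a < b \<longleftrightarrow> lt (f a) (f b))"
      using H1 unfolding has_height_def by blast
    obtain g where g: "bij_betw g {k. k < j} {s\<in>T. lt s t}"
      "\<And>a b. a < j \<Longrightarrow> b < j \<Longrightarrow> (a < b \<longleftrightarrow> lt (g a) (g b))"
      using H2 unfolding has_height_def by blast
    define \<phi> where "\<phi> = inv_into {k. k < i} f \<circ> g"
    have into: "\<phi> a < i" and fp: "f (\<phi> a) = g a" if "a < j" for a
    proof -
      have "g a \<in> {s\<in>T. lt s t}" using g(1) that unfolding bij_betw_def by auto
      hence gi: "g a \<in> f ` {k. k < i}" using f(1) unfolding bij_betw_def by auto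
      show "\<phi> a < i" using inv_into_into[OF gi] unfolding \<phi>_def by simp
      show "f (\<phi> a) = g a" using f_inv_into_f[OF gi] unfolding \<phi>_def by simp
    qed
    have "\<phi> a < \<phi> b" if "a < j" "b < j" "a < b" for a b
      using g(2)[OF that(1,2)] f(2)[OF into[OF that(1)] into[OF that(2)]] fp that by simp
    thus ?thesis using iso_le[of j \<phi> i] into by blast
  qed
  show ?thesis using le[OF assms] le[OF assms(2,1)] by simp
qed

definition leq :: "('a \<Rightarrow> 'a \<Rightarrow> bool) \<Rightarrow> 'a \<Rightarrow> 'a \<Rightarrow> bool" where
  "leq lt s t \<longleftrightarrow> s = t \<or> lt s t"

locale atree =
  fixes T :: "'a set" and lt :: "'a \<Rightarrow> 'a \<Rightarrow> bool" and h :: "'a \<Rightarrow> 'i::wellorder"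
  assumes h_def: "h = ht T lt" and o: "omega1_like TYPE('i)" and ar: "aronszajn TYPE('i) T lt"
begin

lemma tree: "is_tree T lt" using ar unfolding aronszajn_def by (elim conjE)
lemma hex: "\<forall>t\<in>T. \<exists>i::'i. has_height T lt t i" using ar unfolding aronszajn_def by (elim conjE)
lemma levc: "\<forall>i::'i. countable {t\<in>T. ht T lt t = i}" using ar unfolding aronszajn_def by (elim conjE)

lemma irrefl: "t \<in> T \<Longrightarrow> \<not> lt t t" using tree unfolding is_tree_def by blast
lemma trans: "s \<in> T \<Longrightarrow> t \<in> T \<Longrightarrow> u \<in> T \<Longrightarrow> lt s t \<Longrightarrow> lt t u \<Longrightarrow> lt s u"
  using tree unfolding is_tree_def by blast
lemma linear: "t \<in> T \<Longrightarrow> s \<in> T \<Longrightarrow> u \<in> T \<Longrightarrow> lt s t \<Longrightarrow> lt u t \<Longrightarrow> s = u \<or> lt s u \<or> lt u s"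
  using tree unfolding is_tree_def by blast

lemma hh: "t \<in> T \<Longrightarrow> has_height T lt t (h t)"
proof -
  assume t: "t \<in> T"
  then obtain i :: 'i where i: "has_height T lt t i" using hex by blast
  have "(THE i. has_height T lt t i) = i"
    by (rule the_equality[where P="\<lambda>i. has_height T lt t i", OF i]) (rule has_height_unique[OF _ i])
  thus ?thesis using i unfolding h_def ht_def by simp
qed

lemma hh_eq: "t \<in> T \<Longrightarrow> has_height T lt t i \<Longrightarrow> h t = i"
  by (rule has_height_unique[OF hh])

lemma pred_struct:
  assumes t: "t \<in> T"
  obtains f where "bij_betw f {k. k < h t} {s\<in>T. lt s t}"
    "\<And>a b. a < h t \<Longrightarrow> b < h t \<Longrightarrow> (a < b \<longleftrightarrow> lt (f a) (f b))"
    "\<And>k. k < h t \<Longrightarrow> f k \<in> T \<and> lt (f k) t \<and> h (f k) = k"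
proof -
  obtain f where f: "bij_betw f {k. k < h t} {s\<in>T. lt s t}"
    "\<And>a b. a < h t \<Longrightarrow> b < h t \<Longrightarrow> (a < b \<longleftrightarrow> lt (f a) (f b))"
    using hh[OF t] unfolding has_height_def by blast
  have fk: "f k \<in> T \<and> lt (f k) t" if "k < h t" for k
    using f(1) that unfolding bij_betw_def by auto
  have hk: "h (f k) = k" if k: "k < h t" for k
  proof -
    have "{s\<in>T. lt s (f k)} = f ` {j. j < k}"
    proof
      show "{s\<in>T. lt s (f k)} \<subseteq> f ` {j. j < k}"
      proof
        fix s assume s: "s \<in> {s\<in>T. lt s (f k)}"
        hence "s \<in> {s\<in>T. lt s t}" using trans fk[OF k] t by blast
        then obtain j where j: "j < h t" "s = f j" using f(1) unfolding bij_betw_def by auto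
        hence "j < k" using f(2)[OF j(1) k] s by simp
        thus "s \<in> f ` {j. j < k}" using j by blast
      qed
    next
      show "f ` {j. j < k} \<subseteq> {s\<in>T. lt s (f k)}"
      proof
        fix s assume "s \<in> f ` {j. j < k}"
        then obtain j where j: "j < k" "s = f j" by blast
        have jt: "j < h t" using j(1) k by (rule less_trans)
        show "s \<in> {s\<in>T. lt s (f k)}" using fk[OF jt] f(2)[OF jt k] j by simp
      qed
    qed
    moreover have "inj_on f {j. j < k}"
    proof -
      have "{j. j < k} \<subseteq> {k. k < h t}" using k by (auto intro: less_trans)
      moreover have "inj_on f {k. k < h t}" using f(1) unfolding bij_betw_def by blast
      ultimately show ?thesis by (rule inj_on_subset[rotated])
    qed
    ultimately have "bij_betw f {j. j < k} {s\<in>T. lt s (f k)}" unfolding bij_betw_def by simp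
    moreover have "\<forall>a b. a < k \<longrightarrow> b < k \<longrightarrow> (a < b \<longleftrightarrow> lt (f a) (f b))"
      using f(2) k by (meson less_trans)
    ultimately have "has_height T lt (f k) k" unfolding has_height_def by blast
    thus ?thesis using hh_eq fk[OF k] by blast
  qed
  show ?thesis
  proof (rule that[OF f(1) f(2)])
    fix k assume k: "k < h t"
    show "f k \<in> T \<and> lt (f k) t \<and> h (f k) = k" using fk[OF k] hk[OF k] by blast
  qed
qed

lemma lt_h: "s \<in> T \<Longrightarrow> t \<in> T \<Longrightarrow> lt s t \<Longrightarrow> h s < h t"
proof -
  assume st: "s \<in> T" "t \<in> T" "lt s t"
  obtain f where f: "bij_betw f {k. k < h t} {s\<in>T. lt s t}"
    "\<And>a b. a < h t \<Longrightarrow> b < h t \<Longrightarrow> (a < b \<longleftrightarrow> lt (f a) (f b))"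
    "\<And>k. k < h t \<Longrightarrow> f k \<in> T \<and> lt (f k) t \<and> h (f k) = k"
    by (rule pred_struct[OF st(2)], rule that, assumption+)
  have "s \<in> f ` {k. k < h t}" using f(1) st unfolding bij_betw_def by simp
  then obtain k where "k < h t" "s = f k" by blast
  thus ?thesis using f(3)[of k] by simp
qed

lemma pred_exists:
  assumes t: "t \<in> T" and d: "d < h t" shows "\<exists>s\<in>T. lt s t \<and> h s = d"
proof -
  obtain f where "bij_betw f {k. k < h t} {s\<in>T. lt s t}"
    "\<And>a b. a < h t \<Longrightarrow> b < h t \<Longrightarrow> (a < b \<longleftrightarrow> lt (f a) (f b))"
    and f: "\<And>k. k < h t \<Longrightarrow> f k \<in> T \<and> lt (f k) t \<and> h (f k) = k"
    by (rule pred_struct[OF t], rule that, assumption+)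
  show ?thesis using f[OF d] by blast
qed

lemma pred_unique:
  assumes "t \<in> T" "s \<in> T" "s' \<in> T" "lt s t" "lt s' t" "h s = h s'" shows "s = s'"
proof -
  have "s = s' \<or> lt s s' \<or> lt s' s" using linear[OF assms(1-5)] .
  moreover have "\<not> lt s s'" using lt_h[OF assms(2,3)] assms(6) by auto
  moreover have "\<not> lt s' s" using lt_h[OF assms(3,2)] assms(6) by auto
  ultimately show ?thesis by blast
qed

definition pr :: "'i \<Rightarrow> 'a \<Rightarrow> 'a" where
  "pr d x = (THE s. s \<in> T \<and> leq lt s x \<and> h s = d)"

lemma pr_unique:
  assumes "x \<in> T" "s \<in> T" "leq lt s x" "s' \<in> T" "leq lt s' x" "h s = h s'" shows "s = s'"
proof (cases "s = x")
  case True
  show ?thesis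
  proof (rule ccontr)
    assume "s \<noteq> s'"
    hence "lt s' x" using assms(5) True unfolding leq_def by auto
    thus False using lt_h[OF assms(4,1)] True assms(6) by simp
  qed
next
  case False
  hence sx: "lt s x" using assms(3) unfolding leq_def by auto
  show ?thesis
  proof (cases "s' = x")
    case True
    thus ?thesis using lt_h[OF assms(2,1) sx] assms(6) by simp
  next
    case False
    hence "lt s' x" using assms(5) unfolding leq_def by auto
    thus ?thesis using pred_unique[OF assms(1,2,4) sx _ assms(6)] by blast
  qed
qed

lemma pr_props:
  assumes "x \<in> T" "d \<le> h x"
  shows "pr d x \<in> T" "leq lt (pr d x) x" "h (pr d x) = d"
proof -
  have ex: "\<exists>s. s \<in> T \<and> leq lt s x \<and> h s = d"
  proof (cases "d = h x")
    case True
    have "leq lt x x" by (simp add: leq_def)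
    thus ?thesis using assms(1) True by blast
  next
    case False
    hence "d < h x" using assms(2) by simp
    then obtain s where "s \<in> T" "lt s x" "h s = d" using pred_exists[OF assms(1)] by blast
    thus ?thesis unfolding leq_def by blast
  qed
  obtain s0 where s0: "s0 \<in> T \<and> leq lt s0 x \<and> h s0 = d" using ex by blast
  have "\<exists>!s. s \<in> T \<and> leq lt s x \<and> h s = d"
  proof (rule ex1I[of _ s0])
    show "s0 \<in> T \<and> leq lt s0 x \<and> h s0 = d" by (rule s0)
    fix s assume "s \<in> T \<and> leq lt s x \<and> h s = d"
    thus "s = s0" using pr_unique[OF assms(1), of s s0] s0 by simp
  qed
  hence "pr d x \<in> T \<and> leq lt (pr d x) x \<and> h (pr d x) = d"
    unfolding pr_def by (rule theI')
  thus "pr d x \<in> T" "leq lt (pr d x) x" "h (pr d x) = d" by auto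
qed

lemma pr_eq: "x \<in> T \<Longrightarrow> s \<in> T \<Longrightarrow> leq lt s x \<Longrightarrow> h s = d \<Longrightarrow> pr d x = s"
proof -
  assume a: "x \<in> T" "s \<in> T" "leq lt s x" "h s = d"
  have "d \<le> h x"
  proof (cases "s = x")
    case True thus ?thesis using a by simp
  next
    case False hence "lt s x" using a(3) by (simp add: leq_def)
    thus ?thesis using lt_h[OF a(2,1)] a(4) by simp
  qed
  hence p: "pr d x \<in> T" "leq lt (pr d x) x" "h (pr d x) = d" using pr_props[OF a(1)] by auto
  show ?thesis using pr_unique[OF a(1) p(1) p(2) a(2) a(3)] p(3) a(4) by simp
qed

lemma leq_trans: "s \<in> T \<Longrightarrow> t \<in> T \<Longrightarrow> u \<in> T \<Longrightarrow> leq lt s t \<Longrightarrow> leq lt t u \<Longrightarrow> leq lt s u"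
  unfolding leq_def using trans by blast

lemma pr_pr: "x \<in> T \<Longrightarrow> d \<le> d' \<Longrightarrow> d' \<le> h x \<Longrightarrow> pr d (pr d' x) = pr d x"
proof -
  assume a: "x \<in> T" "d \<le> d'" "d' \<le> h x"
  define y where "y = pr d' x"
  define z where "z = pr d x"
  have y: "y \<in> T" "leq lt y x" "h y = d'" using pr_props[OF a(1) a(3)] unfolding y_def by auto
  have dx: "d \<le> h x" using a(2,3) by (rule order_trans)
  have z: "z \<in> T" "leq lt z x" "h z = d" using pr_props[OF a(1) dx] unfolding z_def by auto
  have "leq lt z y"
  proof (cases "z = x")
    case True
    hence "y = x" using y z a pr_unique[OF a(1) y(1) y(2) a(1)] by (simp add: leq_def)
    thus ?thesis using True by (simp add: leq_def)
  next
    case False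
    hence zx: "lt z x" using z by (simp add: leq_def)
    show ?thesis
    proof (cases "y = x")
      case True thus ?thesis using zx by (simp add: leq_def)
    next
      case False
      hence "lt y x" using y by (simp add: leq_def)
      hence "z = y \<or> lt z y \<or> lt y z" using linear[OF a(1) z(1) y(1) zx] by blast
      moreover have "\<not> lt y z" using lt_h[OF y(1) z(1)] y z a by auto
      ultimately show ?thesis unfolding leq_def by blast
    qed
  qed
  thus ?thesis using pr_eq[OF y(1) z(1) _ z(3)] y_def z_def by simp
qed

lemma countable_level: "countable {t\<in>T. h t = i}"
  using levc unfolding h_def by blast

lemma countable_below: "countable {t\<in>T. h t < g}"
proof -
  have "{t\<in>T. h t < g} = (\<Union>i\<in>{i. i < g}. {t\<in>T. h t = i})" by auto
  moreover have "countable {i. i < g}" using o unfolding omega1_like_def by blast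
  ultimately show ?thesis using countable_level by auto
qed

lemma split_level:
  assumes "u \<in> T" "u' \<in> T" "h u = a" "h u' = a" "{s\<in>T. lt s u} \<noteq> {s\<in>T. lt s u'}"
  shows "\<exists>d<a. pr d u \<noteq> pr d u'"
proof -
  have "\<exists>s. (s \<in> T \<and> lt s u \<and> \<not> lt s u') \<or> (s \<in> T \<and> lt s u' \<and> \<not> lt s u)" using assms(5) by blast
  then obtain s where s: "s \<in> T" "(lt s u \<and> \<not> lt s u') \<or> (lt s u' \<and> \<not> lt s u)" by blast
  show ?thesis
  proof (cases "lt s u")
    case True
    hence "\<not> lt s u'" using s by blast
    have hs: "h s < a" using lt_h[OF s(1) assms(1) True] assms by simp
    have "leq lt s u" using True by (simp add: leq_def)
    hence "pr (h s) u = s" using pr_eq[OF assms(1) s(1)] by blast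
    moreover have "pr (h s) u' \<noteq> s"
    proof
      assume e: "pr (h s) u' = s"
      have "leq lt s u'" using pr_props(2)[OF assms(2), of "h s"] hs assms(4) e by simp
      moreover have "s \<noteq> u'" using hs assms(4) by auto
      ultimately show False using \<open>\<not> lt s u'\<close> by (simp add: leq_def)
    qed
    ultimately have "pr (h s) u \<noteq> pr (h s) u'" by simp
    thus ?thesis using hs by blast
  next
    case False
    hence "lt s u'" using s by blast
    have hs: "h s < a" using lt_h[OF s(1) assms(2) \<open>lt s u'\<close>] assms by simp
    have "leq lt s u'" using \<open>lt s u'\<close> by (simp add: leq_def)
    hence "pr (h s) u' = s" using pr_eq[OF assms(2) s(1)] by blast
    moreover have "pr (h s) u \<noteq> s"
    proof
      assume e: "pr (h s) u = s"
      have "leq lt s u" using pr_props(2)[OF assms(1), of "h s"] hs assms(3) e by simp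
      moreover have "s \<noteq> u" using hs assms(3) by auto
      ultimately show False using False by (simp add: leq_def)
    qed
    ultimately have "pr (h s) u \<noteq> pr (h s) u'" by simp
    thus ?thesis using hs by blast
  qed
qed

lemma split_mono:
  assumes "u \<in> T" "u' \<in> T" "h u = a" "h u' = a" "pr d u \<noteq> pr d u'" "d \<le> d'" "d' \<le> a"
  shows "pr d' u \<noteq> pr d' u'"
  using pr_pr[OF assms(1) assms(6)] pr_pr[OF assms(2) assms(6)] assms by auto

end


lemma countable_finmaps:
  assumes "countable (B::'a set)"
  shows "countable {q::'a \<rightharpoonup> 'b::countable. finite (dom q) \<and> dom q \<subseteq> B}"
proof -
  define gr where "gr q = {(x,n). q x = Some n}" for q :: "'a \<rightharpoonup> 'b"
  have inj: "inj_on gr {q. finite (dom q) \<and> dom q \<subseteq> B}"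
  proof (rule inj_onI)
    fix q q' assume "gr q = gr q'"
    hence "\<And>x n. q x = Some n \<longleftrightarrow> q' x = Some n" unfolding gr_def by (metis (mono_tags, lifting) case_prod_conv mem_Collect_eq)
    thus "q = q'" by (metis not_Some_eq ext)
  qed
  have "gr ` {q. finite (dom q) \<and> dom q \<subseteq> B} \<subseteq> {A. finite A \<and> A \<subseteq> B \<times> (UNIV::'b set)}"
  proof
    fix A assume "A \<in> gr ` {q. finite (dom q) \<and> dom q \<subseteq> B}"
    then obtain q where q: "finite (dom q)" "dom q \<subseteq> B" "A = gr q" by blast
    have "A \<subseteq> dom q \<times> ran q" using q(3) unfolding gr_def by (auto simp: ran_def)
    moreover have "finite (dom q \<times> ran q)" using q(1) finite_ran by blast
    ultimately show "A \<in> {A. finite A \<and> A \<subseteq> B \<times> (UNIV::'b set)}"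
      using q(2,3) unfolding gr_def by (auto intro: finite_subset)
  qed
  moreover have "countable {A. finite A \<and> A \<subseteq> B \<times> (UNIV::'b set)}"
    by (rule countable_Collect_finite_subset) (use assms in auto)
  ultimately show ?thesis using countable_image_inj_on[OF _ inj] countable_subset by blast
qed

context atree begin

lemma SS_slots:
  fixes m :: nat and v :: "'i \<Rightarrow> nat \<Rightarrow> 'a"
  assumes SS: "SS TYPE('i) T lt" and st: "stationary S0"
    and w: "\<And>a k. a \<in> S0 \<Longrightarrow> k < m \<Longrightarrow> v a k \<in> T \<and> h (v a k) = a"
  shows "\<exists>S'\<subseteq>S0. stationary S' \<and> (\<forall>k<m. \<forall>a\<in>S'. \<forall>b\<in>S'. a \<noteq> b \<longrightarrow> \<not> lt (v a k) (v b k))"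
  using w
proof (induction m)
  case 0 thus ?case using st by blast
next
  case (Suc m)
  have "\<And>a k. a \<in> S0 \<Longrightarrow> k < m \<Longrightarrow> v a k \<in> T \<and> h (v a k) = a" using Suc.prems by simp
  then obtain S' where S': "S' \<subseteq> S0" "stationary S'"
    "\<forall>k<m. \<forall>a\<in>S'. \<forall>b\<in>S'. a \<noteq> b \<longrightarrow> \<not> lt (v a k) (v b k)" using Suc.IH by blast
  have vm: "a \<in> S' \<Longrightarrow> v a m \<in> T \<and> h (v a m) = a" for a using Suc.prems S'(1) by blast
  define X where "X = (\<lambda>a. v a m) ` S'"
  have hX: "h ` X = S'" using vm unfolding X_def image_image by force
  have "stationary_subset TYPE('i) T lt X"
    unfolding stationary_subset_def h_def[symmetric] using hX S'(2) vm X_def by auto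
  then obtain A where A: "A \<subseteq> X" "antichain T lt A" "stationary_subset TYPE('i) T lt A"
    using SS unfolding SS_def by blast
  define S'' where "S'' = h ` A"
  have st'': "stationary S''" using A(3) unfolding S''_def stationary_subset_def h_def by simp
  have sub: "S'' \<subseteq> S'" using A(1) hX unfolding S''_def by blast
  have inA: "v a m \<in> A" if aS: "a \<in> S''" for a
  proof -
    obtain x where x: "x \<in> A" "a = h x" using aS unfolding S''_def by blast
    then obtain a' where "a' \<in> S'" "x = v a' m" using A(1) X_def by blast
    thus ?thesis using vm x by auto
  qed
  have "\<forall>k<Suc m. \<forall>a\<in>S''. \<forall>b\<in>S''. a \<noteq> b \<longrightarrow> \<not> lt (v a k) (v b k)"
  proof (intro allI impI ballI)
    fix k a b assume k: "k < Suc m" and ab: "a \<in> S''" "b \<in> S''" "a \<noteq> b"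
    show "\<not> lt (v a k) (v b k)"
    proof (cases "k < m")
      case True thus ?thesis using S'(3) sub ab by blast
    next
      case False
      hence "k = m" using k by simp
      moreover have "v a m \<noteq> v b m"
      proof
        assume e: "v a m = v b m"
        have "h (v a m) = a" using vm[of a] sub ab(1) by blast
        moreover have "h (v b m) = b" using vm[of b] sub ab(2) by blast
        ultimately show False using e ab(3) by simp
      qed
      moreover have "v a m \<in> A" "v b m \<in> A" using inA ab(1,2) by auto
      ultimately show ?thesis using A(2) unfolding antichain_def by blast
    qed
  qed
  thus ?case using st'' sub S'(1) by (intro exI[of _ S'']) auto
qed

lemma lt_leq_trans: "s \<in> T \<Longrightarrow> t \<in> T \<Longrightarrow> u \<in> T \<Longrightarrow> leq lt s t \<Longrightarrow> lt t u \<Longrightarrow> lt s u"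
  unfolding leq_def using trans by blast

lemma SS_imp_ST:
  assumes SS: "SS TYPE('i) T lt"
  shows "stat_pc TYPE('i) (ST T lt) ST_le"
  unfolding stat_pc_def
proof (intro allI impI)
  fix S :: "'i set" and p :: "'i \<Rightarrow> 'a \<rightharpoonup> nat"
  assume st: "stationary S" and pS: "\<forall>a\<in>S. p a \<in> ST T lt"
  have pfin: "finite (dom (p a))" and pT: "dom (p a) \<subseteq> T"
    and pac: "\<And>n. antichain T lt {t. p a t = Some n}" if "a \<in> S" for a
    using pS that unfolding ST_def by auto
  define g where "g a = (SOME b. \<forall>x\<in>dom (p a). h x < b)" for a
  have g: "h x < g a" if "a \<in> S" "x \<in> dom (p a)" for a x
  proof -
    have "\<exists>b. \<forall>y\<in>h ` dom (p a). y < b"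
      using o1_countable_bounded[OF o] pfin[OF that(1)] countable_finite by blast
    hence "\<exists>b. \<forall>x\<in>dom (p a). h x < b" by blast
    from someI_ex[OF this] show ?thesis using that(2) unfolding g_def by blast
  qed
  define C0 where "C0 = {d. \<forall>a<d. g a < d}"
  define S1 where "S1 = S \<inter> C0 \<inter> {d. limitp d}"
  have st1: "stationary S1" unfolding S1_def
    using stationary_Int_club[OF o, OF stationary_Int_club[OF o st club_closure_points[OF o]] club_limits[OF o]]
    unfolding C0_def .
  define low where "low a = {x\<in>dom (p a). h x < a}" for a
  define high where "high a = {x\<in>dom (p a). a \<le> h x}" for a
  define f1 where "f1 a = (SOME b. b < a \<and> (\<forall>x\<in>low a. h x < b))" for a
  have f1: "f1 a < a \<and> (\<forall>x\<in>low a. h x < f1 a)" if "a \<in> S1" for a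
  proof -
    have "\<exists>b<a. \<forall>y\<in>h ` low a. y < b"
      by (rule limit_finite_bound) (use that pfin in \<open>auto simp: S1_def low_def\<close>)
    hence "\<exists>b. b < a \<and> (\<forall>x\<in>low a. h x < b)" by blast
    from someI_ex[OF this] show ?thesis unfolding f1_def .
  qed
  obtain g1 where st2: "stationary {a\<in>S1. f1 a = g1}" using fodor[OF o st1] f1 by blast
  define S2 where "S2 = {a\<in>S1. f1 a = g1}"
  have "(\<lambda>a. p a |` low a) ` S2 \<subseteq> {q. finite (dom q) \<and> dom q \<subseteq> {t\<in>T. h t < g1}}"
  proof
    fix q assume "q \<in> (\<lambda>a. p a |` low a) ` S2"
    then obtain a where a: "a \<in> S2" "q = p a |` low a" by blast
    have "dom q = low a" using a(2) unfolding low_def by auto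
    moreover have "low a \<subseteq> {t\<in>T. h t < g1}" using f1[of a] a(1) pT[of a] unfolding S2_def S1_def low_def by auto
    moreover have "finite (low a)" using pfin[of a] a(1) unfolding S2_def S1_def low_def by auto
    ultimately show "q \<in> {q. finite (dom q) \<and> dom q \<subseteq> {t\<in>T. h t < g1}}" by simp
  qed
  hence "countable ((\<lambda>a. p a |` low a) ` S2)"
    using countable_finmaps[OF countable_below] countable_subset by blast
  then obtain q0 where st3: "stationary {a\<in>S2. p a |` low a = q0}"
    using stationary_pigeon[OF o] st2 unfolding S2_def by blast
  define S3 where "S3 = {a\<in>S2. p a |` low a = q0}"
  have domlow: "dom (p a |` low a) = low a" for a unfolding dom_restrict low_def by blast
  have low3: "low a = dom q0" if a3: "a \<in> S3" for a
  proof -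
    have "p a |` low a = q0" using a3 unfolding S3_def by blast
    thus ?thesis using domlow[of a] by simp
  qed
  have lowval: "p a x = q0 x" if "a \<in> S3" "x \<in> low a" for a x
    using that unfolding S3_def by auto
  define W where "W a = pr a ` high a" for a
  define ws where "ws a = (SOME l. set l = W a)" for a
  have S3S: "a \<in> S3 \<Longrightarrow> a \<in> S" for a unfolding S3_def S2_def S1_def by blast
  have wsW: "set (ws a) = W a" if "a \<in> S3" for a
  proof -
    have "finite (W a)" using pfin[OF S3S[OF that]] unfolding W_def high_def by auto
    from someI_ex[OF finite_list[OF this]] show ?thesis unfolding ws_def .
  qed
  have Wprop: "w \<in> T \<and> h w = a" if "a \<in> S3" "w \<in> W a" for a w
    using that pT[OF S3S[OF that(1)]] pr_props unfolding W_def high_def by auto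
  obtain m where st4: "stationary {a\<in>S3. length (ws a) = m}"
    using stationary_pigeon[OF o st3[folded S3_def], of "\<lambda>a. length (ws a)"] by auto
  define S4 where "S4 = {a\<in>S3. length (ws a) = m}"
  have ws4: "ws a ! k \<in> T \<and> h (ws a ! k) = a" if a4: "a \<in> S4" and km: "k < m" for a k
  proof -
    have a3: "a \<in> S3" and len: "length (ws a) = m" using a4 unfolding S4_def by auto
    have "ws a ! k \<in> set (ws a)" using km len by simp
    hence "ws a ! k \<in> W a" using wsW[OF a3] by simp
    thus ?thesis using Wprop[OF a3] by blast
  qed
  define f2 where "f2 a = (SOME b. b < a \<and> (\<forall>k<m. \<forall>l<m. {s\<in>T. lt s (ws a!k)} \<noteq> {s\<in>T. lt s (ws a!l)}
       \<longrightarrow> pr b (ws a!k) \<noteq> pr b (ws a!l)))" for a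
  have f2: "f2 a < a \<and> (\<forall>k<m. \<forall>l<m. {s\<in>T. lt s (ws a!k)} \<noteq> {s\<in>T. lt s (ws a!l)}
       \<longrightarrow> pr (f2 a) (ws a!k) \<noteq> pr (f2 a) (ws a!l))" if a4: "a \<in> S4" for a
  proof -
    define Pr where "Pr = {(k,l). k < m \<and> l < m \<and> {s\<in>T. lt s (ws a!k)} \<noteq> {s\<in>T. lt s (ws a!l)}}"
    define dd where "dd kl = (SOME d. d < a \<and> pr d (ws a ! fst kl) \<noteq> pr d (ws a ! snd kl))" for kl
    have dd: "dd kl < a \<and> pr (dd kl) (ws a ! fst kl) \<noteq> pr (dd kl) (ws a ! snd kl)" if klP: "kl \<in> Pr" for kl
    proof -
      obtain k l where kl: "kl = (k,l)" "k < m" "l < m" "{s\<in>T. lt s (ws a!k)} \<noteq> {s\<in>T. lt s (ws a!l)}"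
        using klP unfolding Pr_def by blast
      have wk: "ws a ! k \<in> T" "h (ws a ! k) = a" using ws4[OF a4 kl(2)] by auto
      have wl: "ws a ! l \<in> T" "h (ws a ! l) = a" using ws4[OF a4 kl(3)] by auto
      have "\<exists>d<a. pr d (ws a ! fst kl) \<noteq> pr d (ws a ! snd kl)"
        using split_level[OF wk(1) wl(1) wk(2) wl(2) kl(4)] kl(1) by simp
      hence "\<exists>d. d < a \<and> pr d (ws a ! fst kl) \<noteq> pr d (ws a ! snd kl)" by blast
      from someI_ex[OF this] show ?thesis unfolding dd_def .
    qed
    have "finite Pr" unfolding Pr_def by (rule finite_subset[of _ "{..<m} \<times> {..<m}"]) auto
    moreover have "limitp a" using a4 unfolding S4_def S3_def S2_def S1_def by blast
    ultimately obtain b where b: "b < a" "\<forall>y\<in>dd ` Pr. y < b"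
      using limit_finite_bound[of a "dd ` Pr"] dd by blast
    have "\<forall>k<m. \<forall>l<m. {s\<in>T. lt s (ws a!k)} \<noteq> {s\<in>T. lt s (ws a!l)} \<longrightarrow> pr b (ws a!k) \<noteq> pr b (ws a!l)"
    proof (intro allI impI)
      fix k l assume kl: "k < m" "l < m" "{s\<in>T. lt s (ws a!k)} \<noteq> {s\<in>T. lt s (ws a!l)}"
      hence P: "(k,l) \<in> Pr" unfolding Pr_def by simp
      show "pr b (ws a!k) \<noteq> pr b (ws a!l)"
        using split_mono[of "ws a!k" "ws a!l" a "dd (k,l)" b] ws4[OF a4 kl(1)] ws4[OF a4 kl(2)]
          dd[OF P] b P by fastforce
    qed
    hence "\<exists>b. b < a \<and> (\<forall>k<m. \<forall>l<m. {s\<in>T. lt s (ws a!k)} \<noteq> {s\<in>T. lt s (ws a!l)}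
       \<longrightarrow> pr b (ws a!k) \<noteq> pr b (ws a!l))" using b by blast
    from someI_ex[OF this] show ?thesis unfolding f2_def .
  qed
  obtain g2 where st5: "stationary {a\<in>S4. f2 a = g2}"
    using fodor[OF o st4[folded S4_def]] f2 by blast
  define S5 where "S5 = {a\<in>S4. f2 a = g2}"
  have "(\<lambda>a. map (pr g2) (ws a)) ` S5 \<subseteq> lists {t\<in>T. h t = g2}"
  proof
    fix zz assume "zz \<in> (\<lambda>a. map (pr g2) (ws a)) ` S5"
    then obtain a where a: "a \<in> S5" "zz = map (pr g2) (ws a)" by blast
    have "pr g2 (ws a ! k) \<in> T \<and> h (pr g2 (ws a ! k)) = g2" if "k < m" for k
      using pr_props[of "ws a ! k" g2] ws4[of a k] f2[of a] a(1) that unfolding S5_def by auto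
    moreover have "length (ws a) = m" using a(1) unfolding S5_def S4_def by simp
    ultimately show "zz \<in> lists {t\<in>T. h t = g2}" using a(2) by (auto simp: in_set_conv_nth)
  qed
  hence "countable ((\<lambda>a. map (pr g2) (ws a)) ` S5)"
    using countable_lists[OF countable_level] countable_subset by blast
  then obtain z where st6: "stationary {a\<in>S5. map (pr g2) (ws a) = z}"
    using stationary_pigeon[OF o st5[folded S5_def]] by blast
  define S6 where "S6 = {a\<in>S5. map (pr g2) (ws a) = z}"
  obtain S7 where S7: "S7 \<subseteq> S6" "stationary S7"
    "\<forall>k<m. \<forall>a\<in>S7. \<forall>b\<in>S7. a \<noteq> b \<longrightarrow> \<not> lt (ws a ! k) (ws b ! k)"
    using SS_slots[OF SS st6[folded S6_def], of m "\<lambda>a k. ws a ! k"] ws4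
    unfolding S6_def S5_def by blast
  have in3: "a \<in> S3" if "a \<in> S7" for a using that S7(1) unfolding S6_def S5_def S4_def by blast
  have in4: "a \<in> S4" if "a \<in> S7" for a using that S7(1) unfolding S6_def S5_def by blast
  have in1: "a \<in> S1" if "a \<in> S7" for a using in3[OF that] unfolding S3_def S2_def by blast
  have K0: "\<not> lt x y \<and> \<not> lt y x \<and> x \<noteq> y"
    if ab: "a \<in> S7" "b \<in> S7" "a < b" and x: "x \<in> high a" and y: "y \<in> high b" for a b x y
  proof -
    have xT: "x \<in> T" using x pT[OF S3S[OF in3[OF ab(1)]]] unfolding high_def by auto
    have yT: "y \<in> T" using y pT[OF S3S[OF in3[OF ab(2)]]] unfolding high_def by auto
    have "h x < g a" using g[OF S3S[OF in3[OF ab(1)]]] x unfolding high_def by auto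
    moreover have "g a < b" using in1[OF ab(2)] ab(3) unfolding S1_def C0_def by blast
    moreover have "b \<le> h y" using y unfolding high_def by auto
    ultimately have hxy: "h x < h y" by simp
    have 1: "x \<noteq> y" using hxy by auto
    have 2: "\<not> lt y x" using lt_h[OF yT xT] hxy by auto
    have 3: "\<not> lt x y"
    proof
      assume xy: "lt x y"
      define u where "u = pr a x"
      define w where "w = pr b y"
      have ax: "a \<le> h x" using x unfolding high_def by auto
      have by': "b \<le> h y" using y unfolding high_def by auto
      have u: "u \<in> T" "leq lt u x" "h u = a" using pr_props[OF xT ax] u_def by auto
      have w: "w \<in> T" "leq lt w y" "h w = b" using pr_props[OF yT by'] w_def by auto
      have uy: "lt u y" using lt_leq_trans[OF u(1) xT yT u(2) xy] .
      have uw: "lt u w"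
      proof (cases "w = y")
        case True thus ?thesis using uy by simp
      next
        case False
        hence "lt w y" using w(2) by (simp add: leq_def)
        hence "u = w \<or> lt u w \<or> lt w u" using linear[OF yT u(1) w(1) uy] by blast
        moreover have "u \<noteq> w" using u(3) w(3) ab(3) by auto
        moreover have "\<not> lt w u" using lt_h[OF w(1) u(1)] u(3) w(3) ab(3) by auto
        ultimately show ?thesis by blast
      qed
      have "u \<in> set (ws a)" using wsW[OF in3[OF ab(1)]] x unfolding W_def u_def by blast
      then obtain k where k: "k < m" "ws a ! k = u"
        using in4[OF ab(1)] unfolding S4_def by (auto simp: in_set_conv_nth)
      have "w \<in> set (ws b)" using wsW[OF in3[OF ab(2)]] y unfolding W_def w_def by blast
      then obtain l where l: "l < m" "ws b ! l = w"
        using in4[OF ab(2)] unfolding S4_def by (auto simp: in_set_conv_nth)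
      have a5: "f2 a = g2" and b5: "f2 b = g2" using S7(1) ab unfolding S6_def S5_def by auto
      have g2a: "g2 < a" using f2[OF in4[OF ab(1)]] a5 by simp
      have g2b: "g2 < b" using g2a ab(3) by simp
      have pu: "pr g2 u \<in> T" "leq lt (pr g2 u) u" "h (pr g2 u) = g2"
        using pr_props[OF u(1)] g2a u(3) by auto
      have "pr g2 u \<noteq> u" using pu(3) g2a u(3) by auto
      hence "lt (pr g2 u) u" using pu(2) by (simp add: leq_def)
      hence "lt (pr g2 u) w" using trans[OF pu(1) u(1) w(1) _ uw] by blast
      hence "leq lt (pr g2 u) w" by (simp add: leq_def)
      hence eq: "pr g2 w = pr g2 u" using pr_eq[OF w(1) pu(1)] pu(3) by blast
      have za: "map (pr g2) (ws a) = z" and zb: "map (pr g2) (ws b) = z"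
        using S7(1) ab unfolding S6_def by auto
      have la: "length (ws a) = m" and lb: "length (ws b) = m"
        using in4 ab unfolding S4_def by auto
      have "pr g2 (ws b ! k) = z ! k" using zb k(1) lb by auto
      also have "\<dots> = pr g2 u" using za k la by auto
      also have "\<dots> = pr g2 (ws b ! l)" using eq l by simp
      finally have prkl: "pr g2 (ws b ! k) = pr g2 (ws b ! l)" .
      have H: "\<forall>k<m. \<forall>l<m. {s\<in>T. lt s (ws b!k)} \<noteq> {s\<in>T. lt s (ws b!l)}
       \<longrightarrow> pr g2 (ws b!k) \<noteq> pr g2 (ws b!l)" using f2[OF in4[OF ab(2)]] b5 by simp
      have "{s\<in>T. lt s (ws b!k)} = {s\<in>T. lt s (ws b!l)}"
        using H k(1) l(1) prkl by blast
      hence "lt u (ws b ! k)" using uw l u(1) by blast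
      moreover have "a \<noteq> b" using ab(3) by simp
      ultimately show False using S7(3) k ab by metis
    qed
    show ?thesis using 1 2 3 by blast
  qed
  have K: "\<not> lt x y \<and> \<not> lt y x \<and> x \<noteq> y"
    if ab: "a \<in> S7" "b \<in> S7" "a \<noteq> b" and x: "x \<in> high a" and y: "y \<in> high b" for a b x y
  proof (cases "a < b")
    case True thus ?thesis using K0[OF ab(1,2) True x y] by blast
  next
    case False hence "b < a" using ab(3) by simp
    thus ?thesis using K0[OF ab(2,1) _ y x] by blast
  qed
  have lowhigh: "x \<in> low a \<or> x \<in> high a" if "x \<in> dom (p a)" for a x
    using that unfolding low_def high_def by auto
  have lownothigh: "x \<notin> high a" if "x \<in> low a" for a x
    using that unfolding low_def high_def by auto
  have compat: "p a t = p b t" if ab: "a \<in> S7" "b \<in> S7" and t: "t \<in> dom (p a)" "t \<in> dom (p b)" for a b t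
  proof (cases "a = b")
    case True thus ?thesis by simp
  next
    case False
    show ?thesis
    proof (cases "t \<in> low a")
      case True
      hence "t \<in> low b" using low3 in3 ab by metis
      thus ?thesis using True lowval in3 ab by metis
    next
      case F: False
      hence ta: "t \<in> high a" using lowhigh t by blast
      show ?thesis
      proof (cases "t \<in> low b")
        case True
        hence "t \<in> low a" using low3 in3 ab by metis
        thus ?thesis using F by blast
      next
        case False
        hence "t \<in> high b" using lowhigh t by blast
        thus ?thesis using K[OF ab \<open>a \<noteq> b\<close> ta] by blast
      qed
    qed
  qed
  have cent: "centered (ST T lt) ST_le (p ` S7)"
    unfolding centered_def
  proof (intro allI impI)
    fix F assume F: "finite F" "F \<subseteq> p ` S7"
    then obtain G where G: "G \<subseteq> S7" "finite G" "F = p ` G" by (meson finite_subset_image)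
    define r where "r t = (if \<exists>a\<in>G. t \<in> dom (p a) then p (SOME a. a \<in> G \<and> t \<in> dom (p a)) t else None)" for t
    have rval: "r t = p a t" if aG: "a \<in> G" and ta: "t \<in> dom (p a)" for a t
    proof -
      have ex: "\<exists>a. a \<in> G \<and> t \<in> dom (p a)" using aG ta by blast
      define c where "c = (SOME a. a \<in> G \<and> t \<in> dom (p a))"
      have c: "c \<in> G" "t \<in> dom (p c)" using someI_ex[OF ex] unfolding c_def by auto
      have ex': "\<exists>a\<in>G. t \<in> dom (p a)" using aG ta by blast
      have "r t = p c t" unfolding r_def c_def[symmetric] using ex' by (simp only: if_True)
      also have "\<dots> = p a t" using compat[of c a t] c aG ta G(1) by blast
      finally show ?thesis .
    qed
    have domr: "dom r = (\<Union>a\<in>G. dom (p a))"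
    proof
      show "dom r \<subseteq> (\<Union>a\<in>G. dom (p a))" unfolding r_def by (auto split: if_splits)
      show "(\<Union>a\<in>G. dom (p a)) \<subseteq> dom r"
      proof
        fix t assume "t \<in> (\<Union>a\<in>G. dom (p a))"
        then obtain a where a: "a \<in> G" "t \<in> dom (p a)" by blast
        thus "t \<in> dom r" using a(2) rval[OF a] by (simp add: domIff)
      qed
    qed
    have inS: "a \<in> S" if "a \<in> G" for a using that G(1) in3 S3S by blast
    have rST: "r \<in> ST T lt" unfolding ST_def
    proof (intro CollectI conjI allI)
      show "finite (dom r)" using domr G(2) pfin inS by auto
      show "dom r \<subseteq> T" using domr pT inS by auto
      fix n
      show "antichain T lt {t. r t = Some n}" unfolding antichain_def
      proof (rule conjI)
        show "{t. r t = Some n} \<subseteq> T" using \<open>dom r \<subseteq> T\<close> by auto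
        show "\<forall>s\<in>{t. r t = Some n}. \<forall>t\<in>{t. r t = Some n}. s \<noteq> t \<longrightarrow> \<not> lt s t \<and> \<not> lt t s"
        proof (intro ballI impI)
        fix s t assume s: "s \<in> {t. r t = Some n}" and t: "t \<in> {t. r t = Some n}" and st: "s \<noteq> t"
        obtain a where a: "a \<in> G" "s \<in> dom (p a)" using s domr by blast
        obtain b where b: "b \<in> G" "t \<in> dom (p b)" using t domr by blast
        have pa: "p a s = Some n" using rval[OF a] s by simp
        have pb: "p b t = Some n" using rval[OF b] t by simp
        have a7: "a \<in> S7" and b7: "b \<in> S7" using a b G(1) by auto
        show "\<not> lt s t \<and> \<not> lt t s"
        proof (cases "s \<in> low a")
          case True
          hence "s \<in> low b" using low3 in3 a7 b7 by metis
          hence "p b s = Some n" using lowval in3 a7 b7 True pa by metis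
          thus ?thesis using pac[OF inS[OF b(1)], of n] pb st unfolding antichain_def by blast
        next
          case sa: False
          show ?thesis
          proof (cases "t \<in> low b")
            case True
            hence "t \<in> low a" using low3 in3 a7 b7 by metis
            hence "p a t = Some n" using lowval in3 a7 b7 True pb by metis
            thus ?thesis using pac[OF inS[OF a(1)], of n] pa st unfolding antichain_def by blast
          next
            case False
            show ?thesis
            proof (cases "a = b")
              case True
              thus ?thesis using pac[OF inS[OF a(1)], of n] pa pb st unfolding antichain_def by blast
            next
              case False
              thus ?thesis using K[OF a7 b7 False] lowhigh a b sa \<open>t \<notin> low b\<close> by blast
            qed
          qed
        qed
      qed
      qed
    qed
    have "\<forall>q\<in>F. ST_le r q" unfolding ST_le_def map_le_def using G(3) rval by auto
    thus "\<exists>r\<in>ST T lt. \<forall>q\<in>F. ST_le r q" using rST by blast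
  qed
  have "S7 \<subseteq> S" using in3 S3S by blast
  thus "\<exists>S'\<subseteq>S. stationary S' \<and> centered (ST T lt) ST_le (p ` S')" using S7(2) cent by blast
qed

end


lemma antichain_subset: "antichain T lt B \<Longrightarrow> A \<subseteq> B \<Longrightarrow> antichain T lt A"
  unfolding antichain_def by blast

lemma ST_imp_aT:
  assumes H: "stat_pc TYPE('i::wellorder) (ST T lt) ST_le"
  shows "stat_pc TYPE('i) (aT T lt) aT_le"
  unfolding stat_pc_def
proof (intro allI impI)
  fix S :: "'i set" and p :: "'i \<Rightarrow> 'a set"
  assume st: "stationary S" and pS: "\<forall>a\<in>S. p a \<in> aT T lt"
  define p' where "p' a = (\<lambda>t. if t \<in> p a then Some (0::nat) else None)" for a
  have p'S: "p' a \<in> ST T lt" if aS: "a \<in> S" for a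
  proof -
    have pa: "finite (p a)" "antichain T lt (p a)" using pS aS unfolding aT_def by auto
    have dom: "dom (p' a) = p a" unfolding p'_def dom_def by auto
    have fib: "{t. p' a t = Some n} \<subseteq> p a" for n unfolding p'_def by auto
    have "antichain T lt {t. p' a t = Some n}" for n
      using antichain_subset[OF pa(2) fib] .
    moreover have "p a \<subseteq> T" using pa(2) unfolding antichain_def by blast
    ultimately show ?thesis unfolding ST_def using dom pa(1) by auto
  qed
  have "\<forall>a\<in>S. p' a \<in> ST T lt" using p'S by blast
  then obtain S' where S': "S' \<subseteq> S" "stationary S'" "centered (ST T lt) ST_le (p' ` S')"
    using H[unfolded stat_pc_def, rule_format, OF st] by blast
  have "centered (aT T lt) aT_le (p ` S')"
    unfolding centered_def
  proof (intro allI impI)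
    fix F assume F: "finite F" "F \<subseteq> p ` S'"
    obtain G where G: "G \<subseteq> S'" "finite G" "F = p ` G" using F finite_subset_image by meson
    have "finite (p' ` G)" "p' ` G \<subseteq> p' ` S'" using G by auto
    then obtain r where r: "r \<in> ST T lt" "\<forall>q\<in>p' ` G. ST_le r q"
      using S'(3) unfolding centered_def by blast
    define A where "A = \<Union>F"
    have sub: "A \<subseteq> {t. r t = Some 0}"
    proof
      fix t assume "t \<in> A"
      then obtain a where a: "a \<in> G" "t \<in> p a" using G(3) unfolding A_def by blast
      have "p' a \<subseteq>\<^sub>m r" using r(2) a(1) unfolding ST_le_def by blast
      moreover have pt: "p' a t = Some 0" using a(2) unfolding p'_def by simp
      moreover have "t \<in> dom (p' a)" using pt by (simp add: domIff)
      ultimately have "r t = Some 0" unfolding map_le_def by force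
      thus "t \<in> {t. r t = Some 0}" by simp
    qed
    have ac: "antichain T lt A" using antichain_subset[OF _ sub] r(1) unfolding ST_def by blast
    have fin: "finite A"
    proof -
      have "\<forall>q\<in>F. finite q" using G pS S'(1) unfolding aT_def by auto
      thus ?thesis unfolding A_def using F(1) by blast
    qed
    have "A \<in> aT T lt" unfolding aT_def using ac fin by blast
    moreover have "\<forall>q\<in>F. aT_le A q" unfolding aT_le_def A_def by blast
    ultimately show "\<exists>r\<in>aT T lt. \<forall>q\<in>F. aT_le r q" by blast
  qed
  thus "\<exists>S'\<subseteq>S. stationary S' \<and> centered (aT T lt) aT_le (p ` S')" using S'(1,2) by blast
qed

lemma aT_imp_SS:
  assumes H: "stat_pc TYPE('i::wellorder) (aT T lt) aT_le"
  shows "SS TYPE('i) T lt"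
  unfolding SS_def
proof (intro allI impI)
  fix X assume X: "stationary_subset TYPE('i) T lt X"
  define hh :: "'a \<Rightarrow> 'i" where "hh = ht T lt"
  have XT: "X \<subseteq> T" and stX: "stationary (hh ` X)" using X unfolding stationary_subset_def hh_def by auto
  define S where "S = hh ` X"
  define t where "t a = (SOME x. x \<in> X \<and> hh x = a)" for a
  have t: "t a \<in> X \<and> hh (t a) = a" if aS: "a \<in> S" for a
  proof -
    have "\<exists>x. x \<in> X \<and> hh x = a" using aS unfolding S_def by blast
    from someI_ex[OF this] show ?thesis unfolding t_def .
  qed
  define p where "p a = {t a}" for a
  have "\<forall>a\<in>S. p a \<in> aT T lt"
  proof
    fix a assume aS: "a \<in> S"
    have "t a \<in> T" using t[OF aS] XT by blast
    thus "p a \<in> aT T lt" unfolding p_def aT_def antichain_def by auto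
  qed
  then obtain S' where S': "S' \<subseteq> S" "stationary S'" "centered (aT T lt) aT_le (p ` S')"
    using H[unfolded stat_pc_def, rule_format, OF stX[folded S_def]] by blast
  define A where "A = t ` S'"
  have AX: "A \<subseteq> X" using t S'(1) unfolding A_def by blast
  have hA: "hh ` A = S'"
  proof -
    have "hh ` A = (\<lambda>a. hh (t a)) ` S'" unfolding A_def by (simp add: image_image)
    also have "\<dots> = (\<lambda>a. a) ` S'" using t S'(1) by (intro image_cong) auto
    also have "\<dots> = S'" by simp
    finally show ?thesis by simp
  qed
  have ac: "antichain T lt A" unfolding antichain_def
  proof (rule conjI)
    show "A \<subseteq> T" using AX XT by blast
    show "\<forall>s\<in>A. \<forall>u\<in>A. s \<noteq> u \<longrightarrow> \<not> lt s u \<and> \<not> lt u s"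
    proof (intro ballI impI)
      fix s u assume s: "s \<in> A" and u: "u \<in> A" and su: "s \<noteq> u"
      obtain a where a: "a \<in> S'" "s = t a" using s A_def by blast
      obtain b where b: "b \<in> S'" "u = t b" using u A_def by blast
      have fF: "finite {p a, p b}" and sF: "{p a, p b} \<subseteq> p ` S'" using a b by auto
      obtain r where r: "r \<in> aT T lt" "\<forall>q\<in>{p a, p b}. aT_le r q"
        using S'(3)[unfolded centered_def, rule_format, OF fF sF] by blast
      have "aT_le r (p a)" "aT_le r (p b)" using r(2) by auto
      hence "s \<in> r" "u \<in> r" using a(2) b(2) unfolding aT_le_def p_def by auto
      moreover have "antichain T lt r" using r(1) unfolding aT_def by simp
      ultimately show "\<not> lt s u \<and> \<not> lt u s" using su unfolding antichain_def by blast
    qed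
  qed
  have "stationary_subset TYPE('i) T lt A"
    unfolding stationary_subset_def hh_def[symmetric] using hA S'(2) AX XT by auto
  thus "\<exists>A\<subseteq>X. antichain T lt A \<and> stationary_subset TYPE('i) T lt A" using AX ac by blast
qed

theorem lemma4:
  fixes T :: "'a set" and lt :: "'a \<Rightarrow> 'a \<Rightarrow> bool"
  assumes "omega1_like TYPE('i::wellorder)"
    and "aronszajn TYPE('i) T lt"
  shows "(SS TYPE('i) T lt \<longleftrightarrow> stat_pc TYPE('i) (aT T lt) aT_le)
       \<and> (stat_pc TYPE('i) (aT T lt) aT_le \<longleftrightarrow> stat_pc TYPE('i) (ST T lt) ST_le)"
proof -
  interpret atree T lt "ht T lt :: 'a \<Rightarrow> 'i"
    by unfold_locales (use assms in auto)
  have 1: "SS TYPE('i) T lt \<Longrightarrow> stat_pc TYPE('i) (ST T lt) ST_le" by (rule SS_imp_ST)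
  have 2: "stat_pc TYPE('i) (ST T lt) ST_le \<Longrightarrow> stat_pc TYPE('i) (aT T lt) aT_le" by (rule ST_imp_aT)
  have 3: "stat_pc TYPE('i) (aT T lt) aT_le \<Longrightarrow> SS TYPE('i) T lt" by (rule aT_imp_SS)
  show ?thesis using 1 2 3 by blast
qed


end
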